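(* Let $H\le\mathrm{GL}_n(q)$ and suppose that, in a suitable basis of $V=\mathbb{F}_q^n$, every $g\in H$ has the block upper-triangular form $$\begin{pmatrix} g_k & g_{k,k-1} & \cdots & g_{k,1}\\ 0 & g_{k-1} & \cdots & g_{k-1,1}\\ \vdots & & \ddots & \vdots\\ 0 & 0 & \cdots & g_1\end{pmatrix},$$ where each $\gamma_i:H\to\mathrm{GL}_{n_i}(q)$, $g\mapsto g_i$, is an irreducible representation, $g_{i,j}$ is an $n_i\times n_j$ matrix and $n_1+\dots+n_k=n$; put $H_i=\gamma_i(H)$. If for every $i$ there exists $x_i\in\mathrm{GL}_{n_i}(q)$ (respectively $x_i\in\mathrm{SL}_{n_i}(q)$) such that $H_i\cap H_i^{x_i}$ consists of upper triangular matrices, then there exist $x,y\in\mathrm{GL}_n(q)$ (respectively $x,y\in\mathrm{SL}_n(q)$) such that $(H\cap H^x)\cap(H\cap H^x)^y\le D(\mathrm{GL}_n(q))$.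
   Context: $D(\mathrm{GL}_n(q))$ is the group of diagonal matrices (in the chosen basis); $H^x=x^{-1}Hx$. *)

theory Defs
  imports "Jordan_Normal_Form.Determinant"
begin

definition GL_mat :: "nat \<Rightarrow> 'a::field mat set" where
  "GL_mat n = {A \<in> carrier_mat n n. invertible_mat A}"

definition SL_mat :: "nat \<Rightarrow> 'a::field mat set" where
  "SL_mat n = {A \<in> carrier_mat n n. det A = 1}"

definition mat_subgroup :: "nat \<Rightarrow> 'a::field mat set \<Rightarrow> bool" where
  "mat_subgroup n H \<longleftrightarrow> H \<subseteq> GL_mat n \<and> 1\<^sub>m n \<in> H \<and>
     (\<forall>g\<in>H. \<forall>h\<in>H. g * h \<in> H) \<and> (\<forall>g\<in>H. \<exists>h\<in>H. g * h = 1\<^sub>m n)"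

text \<open>H^x = x^{-1} H x, for invertible x (g = x^{-1} h x iff x g = h x).\<close>
definition conj_set :: "nat \<Rightarrow> 'a::field mat \<Rightarrow> 'a mat set \<Rightarrow> 'a mat set" where
  "conj_set n x H = {g \<in> carrier_mat n n. \<exists>h\<in>H. x * g = h * x}"

text \<open>Offset of the j-th diagonal block (blocks listed from the top-left).\<close>
definition blk_off :: "nat list \<Rightarrow> nat \<Rightarrow> nat" where
  "blk_off ns j = sum_list (take j ns)"

definition block_upper :: "nat list \<Rightarrow> 'a::zero mat \<Rightarrow> bool" where
  "block_upper ns g \<longleftrightarrow> (\<forall>a<length ns. \<forall>b<a. \<forall>r c.
      blk_off ns a \<le> r \<and> r < blk_off ns a + ns ! a \<and>
      blk_off ns b \<le> c \<and> c < blk_off ns b + ns ! b \<longrightarrow> g $$ (r, c) = 0)"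

definition diag_block :: "nat list \<Rightarrow> nat \<Rightarrow> 'a mat \<Rightarrow> 'a mat" where
  "diag_block ns i g = mat (ns ! i) (ns ! i)
     (\<lambda>(r, c). g $$ (blk_off ns i + r, blk_off ns i + c))"

definition subspace_vec :: "nat \<Rightarrow> 'a::field vec set \<Rightarrow> bool" where
  "subspace_vec m W \<longleftrightarrow> W \<subseteq> carrier_vec m \<and> 0\<^sub>v m \<in> W \<and>
     (\<forall>v\<in>W. \<forall>w\<in>W. v + w \<in> W) \<and> (\<forall>a. \<forall>v\<in>W. a \<cdot>\<^sub>v v \<in> W)"

definition irreducible_mats :: "nat \<Rightarrow> 'a::field mat set \<Rightarrow> bool" where
  "irreducible_mats m S \<longleftrightarrow> 0 < m \<and>
     (\<forall>W. subspace_vec m W \<and> (\<forall>h\<in>S. \<forall>w\<in>W. h *\<^sub>v w \<in> W)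
        \<longrightarrow> W = {0\<^sub>v m} \<or> W = carrier_vec m)"

end

theory Submission imports Defs begin

lemma mult_entry:
  assumes "A \<in> carrier_mat n m" "B \<in> carrier_mat m p" "i < n" "j < p"
  shows "(A * B) $$ (i,j) = (\<Sum>k\<in>{0..<m}. A $$ (i,k) * B $$ (k,j))"
  using assms by (auto simp: scalar_prod_def intro!: sum.cong)

lemma sum_single:
  assumes "a < (n::nat)" "\<And>k. k < n \<Longrightarrow> k \<noteq> a \<Longrightarrow> f k = 0"
  shows "sum f {0..<n} = (f a :: 'b::comm_monoid_add)"
proof -
  have "sum f {0..<n} = f a + sum f ({0..<n} - {a})"
    by (rule sum.remove) (use assms(1) in auto)
  also have "sum f ({0..<n} - {a}) = 0" using assms(2) by (intro sum.neutral) auto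
  finally show ?thesis by simp
qed

lemma blk_off_Nil[simp]: "blk_off [] i = 0" by (simp add: blk_off_def)
lemma blk_off_Cons0[simp]: "blk_off (a # ns) 0 = 0" by (simp add: blk_off_def)
lemma blk_off_ConsS[simp]: "blk_off (a # ns) (Suc i) = a + blk_off ns i" by (simp add: blk_off_def)

lemma blk_off_mono: "i \<le> j \<Longrightarrow> blk_off ns i \<le> blk_off ns j"
proof -
  assume "i \<le> j"
  then obtain d where "j = i + d" by (metis le_add_diff_inverse)
  then show ?thesis unfolding blk_off_def by (simp add: take_add)
qed

lemma blk_off_Suc: "i < length ns \<Longrightarrow> blk_off ns (Suc i) = blk_off ns i + ns ! i"
  unfolding blk_off_def by (simp add: take_Suc_conv_app_nth)

lemma blk_off_le: "blk_off ns i \<le> sum_list ns"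
proof -
  have "sum_list ns = sum_list (take i ns) + sum_list (drop i ns)"
    by (metis append_take_drop_id sum_list_append)
  then show ?thesis unfolding blk_off_def by simp
qed

lemma blk_end_le: "i < length ns \<Longrightarrow> blk_off ns i + ns ! i \<le> sum_list ns"
  using blk_off_le[of ns "Suc i"] blk_off_Suc[of i ns] by simp

lemma blk_order: "a < b \<Longrightarrow> b < length ns \<Longrightarrow> blk_off ns a + ns ! a \<le> blk_off ns b"
  using blk_off_Suc[of a ns] blk_off_mono[of "Suc a" b ns] by simp

lemma blk_locate: "r < sum_list ns \<Longrightarrow> \<exists>i<length ns. blk_off ns i \<le> r \<and> r < blk_off ns i + ns ! i"
proof (induction ns arbitrary: r)
  case Nil then show ?case by simp
next
  case (Cons a ns)
  show ?case
  proof (cases "r < a")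
    case True then show ?thesis by (intro exI[of _ 0]) auto
  next
    case False
    with Cons.prems have "r - a < sum_list ns" by simp
    from Cons.IH[OF this] obtain i where "i < length ns" "blk_off ns i \<le> r - a" "r - a < blk_off ns i + ns ! i" by blast
    then show ?thesis using False by (intro exI[of _ "Suc i"]) auto
  qed
qed

fun bd :: "'a::field mat list \<Rightarrow> 'a mat" where
  "bd [] = 1\<^sub>m 0"
| "bd (A # As) = four_block_mat A (0\<^sub>m (dim_row A) (dim_row (bd As))) (0\<^sub>m (dim_row (bd As)) (dim_row A)) (bd As)"

lemma bd_carrier: "list_all2 (\<lambda>A m. A \<in> carrier_mat m m) xs ns \<Longrightarrow> bd xs \<in> carrier_mat (sum_list ns) (sum_list ns)"
  by (induction rule: list_all2_induct) auto

lemma bd_det: "list_all2 (\<lambda>A m. A \<in> carrier_mat m m) xs ns \<Longrightarrow> det (bd xs) = prod_list (map det xs)"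
proof (induction rule: list_all2_induct)
  case Nil then show ?case by simp
next
  case (Cons A As m ms)
  have c: "bd As \<in> carrier_mat (sum_list ms) (sum_list ms)" using bd_carrier[OF Cons(2)] .
  show ?case using Cons c
    by (simp, subst det_four_block_mat_upper_right_zero[of _ m _ "sum_list ms"]) auto
qed

lemma bd_row:
  "list_all2 (\<lambda>A m. A \<in> carrier_mat m m) xs ns \<Longrightarrow> i < length ns \<Longrightarrow> r < ns ! i \<Longrightarrow> c < sum_list ns \<Longrightarrow>
   bd xs $$ (blk_off ns i + r, c) = (if blk_off ns i \<le> c \<and> c < blk_off ns i + ns ! i then (xs ! i) $$ (r, c - blk_off ns i) else 0)"
proof (induction arbitrary: i c rule: list_all2_induct)
  case Nil then show ?case by simp
next
  case (Cons A As m ms)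
  have cb: "bd As \<in> carrier_mat (sum_list ms) (sum_list ms)" using bd_carrier[OF Cons(2)] .
  show ?case
  proof (cases i)
    case 0 then show ?thesis using Cons cb by auto
  next
    case (Suc j)
    have j: "j < length ms" "r < ms ! j" using Cons.prems Suc by auto
    have e: "bd (A # As) $$ (blk_off (m # ms) i + r, c) = (if c < m then 0 else bd As $$ (blk_off ms j + r, c - m))"
      using Cons.hyps cb Cons.prems Suc blk_end_le[OF j(1)] by auto
    show ?thesis
    proof (cases "c < m")
      case True then show ?thesis using e Suc by auto
    next
      case False
      then have "c - m < sum_list ms" using Cons.prems by auto
      from Cons.IH[OF j this] e False Suc show ?thesis by auto
    qed
  qed
qed

lemma bd_col:
  "list_all2 (\<lambda>A m. A \<in> carrier_mat m m) xs ns \<Longrightarrow> i < length ns \<Longrightarrow> c < ns ! i \<Longrightarrow> r < sum_list ns \<Longrightarrow>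
   bd xs $$ (r, blk_off ns i + c) = (if blk_off ns i \<le> r \<and> r < blk_off ns i + ns ! i then (xs ! i) $$ (r - blk_off ns i, c) else 0)"
proof (induction arbitrary: i r rule: list_all2_induct)
  case Nil then show ?case by simp
next
  case (Cons A As m ms)
  have cb: "bd As \<in> carrier_mat (sum_list ms) (sum_list ms)" using bd_carrier[OF Cons(2)] .
  show ?case
  proof (cases i)
    case 0 then show ?thesis using Cons cb by auto
  next
    case (Suc j)
    have j: "j < length ms" "c < ms ! j" using Cons.prems Suc by auto
    have e: "bd (A # As) $$ (r, blk_off (m # ms) i + c) = (if r < m then 0 else bd As $$ (r - m, blk_off ms j + c))"
      using Cons.hyps cb Cons.prems Suc blk_end_le[OF j(1)] by auto
    show ?thesis
    proof (cases "r < m")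
      case True then show ?thesis using e Suc by auto
    next
      case False
      then have "r - m < sum_list ms" using Cons.prems by auto
      from Cons.IH[OF j this] e False Suc show ?thesis by auto
    qed
  qed
qed

lemma block_sum:
  assumes "i < length ns" "\<And>k. k < sum_list ns \<Longrightarrow> \<not> (blk_off ns i \<le> k \<and> k < blk_off ns i + ns ! i) \<Longrightarrow> f k = 0"
  shows "sum f {0..<sum_list ns} = (\<Sum>k\<in>{0..<ns ! i}. f (blk_off ns i + k) :: 'b::comm_monoid_add)"
proof -
  have le: "blk_off ns i + ns ! i \<le> sum_list ns" using blk_end_le[OF assms(1)] .
  have "sum f {0..<sum_list ns} = sum f {blk_off ns i..<blk_off ns i + ns ! i}"
    by (rule sum.mono_neutral_right) (use le assms(2) in auto)
  also have "\<dots> = (\<Sum>k\<in>{0..<ns ! i}. f (blk_off ns i + k))"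
    using sum.shift_bounds_nat_ivl[of f 0 "blk_off ns i" "ns ! i"] by (simp add: add.commute)
  finally show ?thesis .
qed

lemma diag_block_carrier[simp]: "diag_block ns i g \<in> carrier_mat (ns ! i) (ns ! i)"
  by (simp add: diag_block_def)

lemma diag_block_dim[simp]: "dim_row (diag_block ns i g) = ns ! i" "dim_col (diag_block ns i g) = ns ! i"
  by (simp_all add: diag_block_def)

lemma diag_block_left:
  assumes L: "list_all2 (\<lambda>A m. A \<in> carrier_mat m m) xs ns" and i: "i < length ns"
    and g: "g \<in> carrier_mat (sum_list ns) (sum_list ns)"
  shows "diag_block ns i (bd xs * g) = xs ! i * diag_block ns i g"
proof -
  have xi: "xs ! i \<in> carrier_mat (ns ! i) (ns ! i)" using L i by (simp add: list_all2_conv_all_nth)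
  have b: "bd xs \<in> carrier_mat (sum_list ns) (sum_list ns)" using bd_carrier[OF L] .
  have le: "blk_off ns i + ns ! i \<le> sum_list ns" using blk_end_le[OF i] .
  show ?thesis
  proof (rule eq_matI)
    fix r c assume rc: "r < dim_row (xs ! i * diag_block ns i g)" "c < dim_col (xs ! i * diag_block ns i g)"
    then have r: "r < ns ! i" and c: "c < ns ! i" using xi by auto
    have "diag_block ns i (bd xs * g) $$ (r, c) = (bd xs * g) $$ (blk_off ns i + r, blk_off ns i + c)"
      using r c by (simp add: diag_block_def)
    also have "\<dots> = (\<Sum>k\<in>{0..<sum_list ns}. bd xs $$ (blk_off ns i + r, k) * g $$ (k, blk_off ns i + c))"
      by (rule mult_entry[OF b g]) (use r c le in auto)
    also have "\<dots> = (\<Sum>k\<in>{0..<ns ! i}. bd xs $$ (blk_off ns i + r, blk_off ns i + k) * g $$ (blk_off ns i + k, blk_off ns i + c))"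
      by (rule block_sum[OF i]) (auto simp add: bd_row[OF L i r])
    also have "\<dots> = (\<Sum>k\<in>{0..<ns ! i}. (xs ! i) $$ (r, k) * diag_block ns i g $$ (k, c))"
      by (rule sum.cong) (use r c le in \<open>auto simp: bd_row[OF L i r] diag_block_def\<close>)
    also have "\<dots> = (xs ! i * diag_block ns i g) $$ (r, c)"
      by (rule mult_entry[symmetric, OF xi diag_block_carrier r c])
    finally show "diag_block ns i (bd xs * g) $$ (r, c) = (xs ! i * diag_block ns i g) $$ (r, c)" .
  qed (use xi in auto)
qed

lemma diag_block_right:
  assumes L: "list_all2 (\<lambda>A m. A \<in> carrier_mat m m) xs ns" and i: "i < length ns"
    and g: "g \<in> carrier_mat (sum_list ns) (sum_list ns)"
  shows "diag_block ns i (g * bd xs) = diag_block ns i g * xs ! i"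
proof -
  have xi: "xs ! i \<in> carrier_mat (ns ! i) (ns ! i)" using L i by (simp add: list_all2_conv_all_nth)
  have b: "bd xs \<in> carrier_mat (sum_list ns) (sum_list ns)" using bd_carrier[OF L] .
  have le: "blk_off ns i + ns ! i \<le> sum_list ns" using blk_end_le[OF i] .
  show ?thesis
  proof (rule eq_matI)
    fix r c assume rc: "r < dim_row (diag_block ns i g * xs ! i)" "c < dim_col (diag_block ns i g * xs ! i)"
    then have r: "r < ns ! i" and c: "c < ns ! i" using xi by auto
    have "diag_block ns i (g * bd xs) $$ (r, c) = (g * bd xs) $$ (blk_off ns i + r, blk_off ns i + c)"
      using r c by (simp add: diag_block_def)
    also have "\<dots> = (\<Sum>k\<in>{0..<sum_list ns}. g $$ (blk_off ns i + r, k) * bd xs $$ (k, blk_off ns i + c))"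
      by (rule mult_entry[OF g b]) (use r c le in auto)
    also have "\<dots> = (\<Sum>k\<in>{0..<ns ! i}. g $$ (blk_off ns i + r, blk_off ns i + k) * bd xs $$ (blk_off ns i + k, blk_off ns i + c))"
      by (rule block_sum[OF i]) (auto simp add: bd_col[OF L i c])
    also have "\<dots> = (\<Sum>k\<in>{0..<ns ! i}. diag_block ns i g $$ (r, k) * (xs ! i) $$ (k, c))"
      by (rule sum.cong) (use r c le in \<open>auto simp: bd_col[OF L i c] diag_block_def\<close>)
    also have "\<dots> = (diag_block ns i g * xs ! i) $$ (r, c)"
      by (rule mult_entry[symmetric, OF diag_block_carrier xi r c])
    finally show "diag_block ns i (g * bd xs) $$ (r, c) = (diag_block ns i g * xs ! i) $$ (r, c)" .
  qed (use xi in auto)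
qed

lemma invertible_det_nz:
  assumes A: "(A::'a::field mat) \<in> carrier_mat n n" and inv: "invertible_mat A"
  shows "det A \<noteq> 0"
proof -
  from inv obtain B where AB: "A * B = 1\<^sub>m n" and BA: "B * A = 1\<^sub>m (dim_row B)"
    using A unfolding invertible_mat_def inverts_mat_def by auto
  have "dim_col B = n" using AB A by (metis index_mult_mat(3) index_one_mat(3))
  moreover have "dim_row B = n" using BA A by (metis index_mult_mat(3) index_one_mat(3) carrier_matD(2))
  ultimately have B: "B \<in> carrier_mat n n" by auto
  have "det A * det B = 1" using det_mult[OF A B] AB by simp
  then show ?thesis by auto
qed

lemma det_nz_invertible:
  assumes A: "(A::'a::field mat) \<in> carrier_mat n n" and d: "det A \<noteq> 0"
  shows "invertible_mat A"
proof -
  have "A \<in> Units (ring_mat TYPE('a) n n)" by (rule det_non_zero_imp_unit[OF A d])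
  then obtain B where B: "B \<in> carrier_mat n n" "B * A = 1\<^sub>m n" "A * B = 1\<^sub>m n"
    unfolding Units_def ring_mat_def by auto
  then show ?thesis using A unfolding invertible_mat_def inverts_mat_def square_mat.simps by auto
qed

lemma upper_from_blocks:
  assumes g: "g \<in> carrier_mat (sum_list ns) (sum_list ns)" and bu: "block_upper ns g"
    and ut: "\<forall>i<length ns. upper_triangular (diag_block ns i g)"
  shows "upper_triangular g"
  unfolding upper_triangular_def
proof (intro allI impI)
  fix r c assume r: "r < dim_row g" and cr: "c < r"
  then have r': "r < sum_list ns" and c': "c < sum_list ns" using g by auto
  obtain a where a: "a < length ns" "blk_off ns a \<le> r" "r < blk_off ns a + ns ! a" using blk_locate[OF r'] by blast
  obtain b where b: "b < length ns" "blk_off ns b \<le> c" "c < blk_off ns b + ns ! b" using blk_locate[OF c'] by blast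
  consider "b < a" | "a = b" | "a < b" by linarith
  then show "g $$ (r, c) = 0"
  proof cases
    case 1 then show ?thesis using bu a b unfolding block_upper_def by blast
  next
    case 2
    have "diag_block ns a g $$ (r - blk_off ns a, c - blk_off ns a) = 0"
      using ut a b 2 cr by (intro upper_triangularD) auto
    then show ?thesis using a b 2 by (simp add: diag_block_def)
  next
    case 3
    then have "blk_off ns a + ns ! a \<le> blk_off ns b" using blk_order b by blast
    then show ?thesis using a b cr by linarith
  qed
qed

definition antidiag :: "nat \<Rightarrow> 'a::field mat \<Rightarrow> bool" where
  "antidiag n y \<longleftrightarrow> y \<in> carrier_mat n n \<and> (\<forall>i<n. \<forall>j<n. i + j \<noteq> n - 1 \<longrightarrow> y $$ (i,j) = 0)
     \<and> (\<forall>i<n. y $$ (i, n - 1 - i) \<noteq> 0)"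

lemma anti_conj:
  assumes y: "antidiag n y" and k: "k \<in> carrier_mat n n" "upper_triangular k"
    and g: "g \<in> carrier_mat n n" and eq: "y * g = k * y" and ab: "a < b" "b < n"
  shows "g $$ (a, b) = 0"
proof -
  have yc: "y \<in> carrier_mat n n" using y by (simp add: antidiag_def)
  let ?i = "n - 1 - a"
  have i: "?i < n" using ab by auto
  have "(y * g) $$ (?i, b) = (\<Sum>t\<in>{0..<n}. y $$ (?i, t) * g $$ (t, b))"
    by (rule mult_entry[OF yc g i ab(2)])
  also have "\<dots> = y $$ (?i, a) * g $$ (a, b)"
    by (rule sum_single) (use y ab in \<open>auto simp: antidiag_def\<close>)
  finally have 1: "(y * g) $$ (?i, b) = y $$ (?i, a) * g $$ (a, b)" .
  have "(k * y) $$ (?i, b) = (\<Sum>t\<in>{0..<n}. k $$ (?i, t) * y $$ (t, b))"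
    by (rule mult_entry[OF k(1) yc i ab(2)])
  also have "\<dots> = k $$ (?i, n - 1 - b) * y $$ (n - 1 - b, b)"
    by (rule sum_single) (use y ab in \<open>auto simp: antidiag_def\<close>)
  also have "k $$ (?i, n - 1 - b) = 0" using k ab by (intro upper_triangularD) auto
  finally have 2: "(k * y) $$ (?i, b) = 0" by simp
  have ia: "n - 1 - ?i = a" using ab by auto
  have "y $$ (?i, n - 1 - ?i) \<noteq> 0" using y i unfolding antidiag_def by blast
  then have "y $$ (?i, a) \<noteq> 0" by (metis ia)
  with 1 2 eq show ?thesis by simp
qed



lemma J_sq:
  fixes J :: "'a::field mat"
  assumes J_def: "J = mat n n (\<lambda>(i,j). if i + j = n - 1 then 1 else 0)"
  shows "J * J = 1\<^sub>m n"
proof -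
  have Jc: "J \<in> carrier_mat n n" by (simp add: J_def)
  show ?thesis
  proof (rule eq_matI)
    fix i j assume ij: "i < dim_row (1\<^sub>m n :: 'a mat)" "j < dim_col (1\<^sub>m n :: 'a mat)"
    then have i: "i < n" and j: "j < n" by auto
    have "(J * J) $$ (i, j) = (\<Sum>t\<in>{0..<n}. J $$ (i, t) * J $$ (t, j))"
      by (rule mult_entry[OF Jc Jc i j])
    also have "\<dots> = J $$ (i, n - 1 - i) * J $$ (n - 1 - i, j)"
    proof (rule sum_single)
      show "n - 1 - i < n" using i by simp
      fix t assume t: "t < n" "t \<noteq> n - 1 - i"
      then have "i + t \<noteq> n - 1" using i by linarith
      then have "J $$ (i, t) = 0" using i t(1) unfolding J_def by simp
      then show "J $$ (i, t) * J $$ (t, j) = 0" by simp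
    qed
    also have "\<dots> = (1\<^sub>m n :: 'a mat) $$ (i, j)"
    proof -
      have k: "n - 1 - i < n" "i + (n - 1 - i) = n - 1" using i by auto
      have e: "(n - 1 - i + j = n - 1) = (i = j)" using i j by linarith
      have "J $$ (i, n - 1 - i) = 1" using i k unfolding J_def by simp
      moreover have "J $$ (n - 1 - i, j) = (if i = j then 1 else 0)" using i j k(1) e unfolding J_def by simp
      ultimately show ?thesis using i j by simp
    qed
    finally show "(J * J) $$ (i, j) = (1\<^sub>m n :: 'a mat) $$ (i, j)" .
  qed (auto simp: J_def)
qed
lemma exists_y: "\<exists>y::'a::field mat. antidiag n y \<and> det y = 1"
proof (cases "n = 0")
  case True
  then show ?thesis by (intro exI[of _ "1\<^sub>m 0"]) (auto simp: antidiag_def)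
next
  case False
  define J :: "'a mat" where "J = mat n n (\<lambda>(i,j). if i + j = n - 1 then 1 else 0)"
  have Jc: "J \<in> carrier_mat n n" by (simp add: J_def)
  have JJ: "J * J = 1\<^sub>m n" by (rule J_sq[OF J_def])
  have dJ: "det J * det J = 1" using det_mult[OF Jc Jc] JJ by simp
  define y where "y = multrow 0 (det J) J"
  have n0: "0 < n" using False by simp
  have "det y = det J * det J" unfolding y_def by (rule det_multrow[OF n0 Jc])
  then have dy: "det y = 1" using dJ by simp
  have dJnz: "det J \<noteq> 0" using dJ by auto
  have "antidiag n y"
    unfolding antidiag_def
  proof (intro conjI allI impI)
    show "y \<in> carrier_mat n n" using Jc unfolding y_def carrier_mat_def by simp
  next
    fix i j assume a: "i < n" "j < n" "i + j \<noteq> n - 1"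
    have "J $$ (i, j) = 0" using a unfolding J_def by simp
    then show "y $$ (i, j) = 0" using a Jc unfolding y_def by auto
  next
    fix i assume a: "i < n"
    have k: "n - 1 - i < n" "i + (n - 1 - i) = n - 1" using a by auto
    then have "J $$ (i, n - 1 - i) = 1" using a unfolding J_def by simp
    then show "y $$ (i, n - 1 - i) \<noteq> 0" using a Jc dJnz k(1) unfolding y_def by auto
  qed
  with dy show ?thesis by blast
qed

lemma K_upper:
  assumes H: "mat_subgroup n H" and n: "sum_list ns = n"
    and bu: "\<forall>g\<in>H. block_upper ns g"
    and L: "list_all2 (\<lambda>A m. A \<in> carrier_mat m m) xs ns"
    and U: "\<forall>i<length ns. \<forall>h \<in> diag_block ns i ` H \<inter> conj_set (ns ! i) (xs ! i) (diag_block ns i ` H). upper_triangular h"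
    and g: "g \<in> H \<inter> conj_set n (bd xs) H"
  shows "upper_triangular g"
proof -
  have gc: "g \<in> carrier_mat (sum_list ns) (sum_list ns)" using g n by (simp add: conj_set_def)
  obtain h where h: "h \<in> H" "bd xs * g = h * bd xs" using g by (auto simp: conj_set_def)
  have hc: "h \<in> carrier_mat (sum_list ns) (sum_list ns)" using H h(1) n by (auto simp: mat_subgroup_def GL_mat_def)
  have "\<forall>i<length ns. upper_triangular (diag_block ns i g)"
  proof (intro allI impI)
    fix i assume i: "i < length ns"
    have "xs ! i * diag_block ns i g = diag_block ns i h * xs ! i"
      using diag_block_left[OF L i gc] diag_block_right[OF L i hc] h(2) by simp
    then have "diag_block ns i g \<in> conj_set (ns ! i) (xs ! i) (diag_block ns i ` H)"
      using h(1) unfolding conj_set_def by auto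
    moreover have "diag_block ns i g \<in> diag_block ns i ` H" using g by auto
    ultimately show "upper_triangular (diag_block ns i g)" using U i by blast
  qed
  then show ?thesis using upper_from_blocks[OF gc] bu g by blast
qed

lemma core:
  assumes H: "mat_subgroup n H" and n: "sum_list ns = n"
    and bu: "\<forall>g\<in>H. block_upper ns g"
    and L: "list_all2 (\<lambda>A m. A \<in> carrier_mat m m) xs ns"
    and U: "\<forall>i<length ns. \<forall>h \<in> diag_block ns i ` H \<inter> conj_set (ns ! i) (xs ! i) (diag_block ns i ` H). upper_triangular h"
    and y: "antidiag n y"
  shows "\<forall>g \<in> (H \<inter> conj_set n (bd xs) H) \<inter> conj_set n y (H \<inter> conj_set n (bd xs) H). diagonal_mat g"
proof
  fix g assume g: "g \<in> (H \<inter> conj_set n (bd xs) H) \<inter> conj_set n y (H \<inter> conj_set n (bd xs) H)"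
  have gu: "upper_triangular g" using K_upper[OF H n bu L U] g by blast
  have gc: "g \<in> carrier_mat n n" using g by (simp add: conj_set_def)
  obtain k where k: "k \<in> H \<inter> conj_set n (bd xs) H" "y * g = k * y" using g by (auto simp: conj_set_def)
  have ku: "upper_triangular k" using K_upper[OF H n bu L U k(1)] .
  have kc: "k \<in> carrier_mat n n" using k(1) by (simp add: conj_set_def)
  show "diagonal_mat g" unfolding diagonal_mat_def
  proof (intro allI impI)
    fix i j assume i: "i < dim_row g" and j: "j < dim_col g" and ij: "i \<noteq> j"
    show "g $$ (i, j) = 0"
    proof (cases "j < i")
      case True then show ?thesis using gu i by (intro upper_triangularD)
    next
      case False
      then have "i < j" using ij by simp
      then show ?thesis using anti_conj[OF y kc ku gc k(2)] j gc by auto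
    qed
  qed
qed

theorem mainTheorem10:
  fixes H :: "'a::{finite, field} mat set" and n :: nat and ns :: "nat list"
  assumes "mat_subgroup n H"
    and "sum_list ns = n"
    and "\<forall>g\<in>H. block_upper ns g"
    and "\<forall>i<length ns. irreducible_mats (ns ! i) (diag_block ns i ` H)"
  shows "((\<forall>i<length ns. \<exists>xi\<in>GL_mat (ns ! i).
              (\<forall>h \<in> diag_block ns i ` H \<inter> conj_set (ns ! i) xi (diag_block ns i ` H).
                 upper_triangular h))
          \<longrightarrow> (\<exists>x\<in>GL_mat n. \<exists>y\<in>GL_mat n.
                \<forall>g \<in> (H \<inter> conj_set n x H) \<inter> conj_set n y (H \<inter> conj_set n x H).
                   diagonal_mat g))
       \<and> ((\<forall>i<length ns. \<exists>xi\<in>SL_mat (ns ! i).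
              (\<forall>h \<in> diag_block ns i ` H \<inter> conj_set (ns ! i) xi (diag_block ns i ` H).
                 upper_triangular h))
          \<longrightarrow> (\<exists>x\<in>SL_mat n. \<exists>y\<in>SL_mat n.
                \<forall>g \<in> (H \<inter> conj_set n x H) \<inter> conj_set n y (H \<inter> conj_set n x H).
                   diagonal_mat g))"
proof -
  obtain y :: "'a mat" where y: "antidiag n y" "det y = 1" using exists_y by blast
  have yc: "y \<in> carrier_mat n n" using y(1) by (simp add: antidiag_def)
  have yGL: "y \<in> GL_mat n" using det_nz_invertible[OF yc] y(2) yc by (simp add: GL_mat_def)
  have ySL: "y \<in> SL_mat n" using y(2) yc by (simp add: SL_mat_def)
  let ?P = "\<lambda>i xi. \<forall>h \<in> diag_block ns i ` H \<inter> conj_set (ns ! i) xi (diag_block ns i ` H). upper_triangular h"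
  have bdc: "bd xs \<in> carrier_mat n n" if "list_all2 (\<lambda>A m. A \<in> carrier_mat m m) xs ns" for xs :: "'a mat list"
    using bd_carrier[OF that] assms(2) by simp
  show ?thesis
  proof (intro conjI impI)
    assume A: "\<forall>i<length ns. \<exists>xi\<in>GL_mat (ns ! i). ?P i xi"
    define f where "f i = (SOME xi. xi \<in> GL_mat (ns ! i) \<and> ?P i xi)" for i
    have f: "\<forall>i<length ns. f i \<in> GL_mat (ns ! i) \<and> ?P i (f i)"
    proof (intro allI impI)
      fix i assume "i < length ns"
      then have "\<exists>xi. xi \<in> GL_mat (ns ! i) \<and> ?P i xi" using A by blast
      then show "f i \<in> GL_mat (ns ! i) \<and> ?P i (f i)" unfolding f_def by (rule someI_ex)
    qed
    define xs where "xs = map f [0..<length ns]"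
    have L: "list_all2 (\<lambda>A m. A \<in> carrier_mat m m) xs ns"
      using f by (auto simp: xs_def list_all2_conv_all_nth GL_mat_def)
    have U: "\<forall>i<length ns. ?P i (xs ! i)" using f by (simp add: xs_def)
    have "0 \<notin> set (map det xs)"
    proof
      assume "0 \<in> set (map det xs)"
      then obtain i where i: "i < length ns" "det (f i) = 0" by (auto simp: xs_def)
      then have "f i \<in> carrier_mat (ns ! i) (ns ! i)" "invertible_mat (f i)" using f by (auto simp: GL_mat_def)
      then show False using invertible_det_nz i(2) by blast
    qed
    then have "det (bd xs) \<noteq> 0" using bd_det[OF L] by (simp add: prod_list_zero_iff)
    then have "bd xs \<in> GL_mat n" using det_nz_invertible[OF bdc[OF L]] bdc[OF L] by (simp add: GL_mat_def)
    then show "\<exists>x\<in>GL_mat n. \<exists>y\<in>GL_mat n.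
                \<forall>g \<in> (H \<inter> conj_set n x H) \<inter> conj_set n y (H \<inter> conj_set n x H). diagonal_mat g"
      using core[OF assms(1,2,3) L U y(1)] yGL by blast
  next
    assume A: "\<forall>i<length ns. \<exists>xi\<in>SL_mat (ns ! i). ?P i xi"
    define f where "f i = (SOME xi. xi \<in> SL_mat (ns ! i) \<and> ?P i xi)" for i
    have f: "\<forall>i<length ns. f i \<in> SL_mat (ns ! i) \<and> ?P i (f i)"
    proof (intro allI impI)
      fix i assume "i < length ns"
      then have "\<exists>xi. xi \<in> SL_mat (ns ! i) \<and> ?P i xi" using A by blast
      then show "f i \<in> SL_mat (ns ! i) \<and> ?P i (f i)" unfolding f_def by (rule someI_ex)
    qed
    define xs where "xs = map f [0..<length ns]"
    have L: "list_all2 (\<lambda>A m. A \<in> carrier_mat m m) xs ns"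
      using f by (auto simp: xs_def list_all2_conv_all_nth SL_mat_def)
    have U: "\<forall>i<length ns. ?P i (xs ! i)" using f by (simp add: xs_def)
    have m: "map det xs = map (\<lambda>_. 1) xs" unfolding xs_def map_map
      by (rule map_cong) (use f in \<open>auto simp: SL_mat_def\<close>)
    have p: "prod_list (map (\<lambda>_. 1::'a) xs) = 1" by (induction xs) auto
    have "det (bd xs) = 1" using bd_det[OF L] m p by simp
    then have "bd xs \<in> SL_mat n" using bdc[OF L] by (simp add: SL_mat_def)
    then show "\<exists>x\<in>SL_mat n. \<exists>y\<in>SL_mat n.
                \<forall>g \<in> (H \<inter> conj_set n x H) \<inter> conj_set n y (H \<inter> conj_set n x H). diagonal_mat g"
      using core[OF assms(1,2,3) L U y(1)] ySL by blast
  qed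
qed

end
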